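(* Let $\lambda\in(0,1)$ and let $p:[1,\infty)\to(0,\infty)$ be continuously differentiable with $p(t)$ non-increasing and tending to $0$, and $p(t)\ln t$ non-decreasing and tending to $+\infty$ as $t\to\infty$. Put $s_j=p(j)\ln j$. Then $$\sum_{j=1}^N\lambda^{s_j}\ \sim\ N^{1+p(N)\ln\lambda}\qquad\text{as }N\to\infty,$$ i.e. the ratio of the two sides tends to $1$. *)

theory Defs
  imports "HOL-Analysis.Analysis"
begin

end

theory Submission imports Defs "HOL-Analysis.Analysis" "HOL-Real_Asymp.Real_Asymp" begin

lemma key_ineq:
  fixes c :: real and j :: nat
  assumes c: "0 < c" "c \<le> 1" and j: "j \<ge> 1"
  shows "c * real j powr (c - 1) \<le> real j powr c - real (j - 1) powr c"
proof (cases "j = 1")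
  case True then show ?thesis using c by simp
next
  case False
  then have j2: "j \<ge> 2" using j by simp
  have pos: "(real j - 1) / real j > 0" using j2 by simp
  have "((real j - 1) / real j) powr c * 1 powr (1 - c) \<le> c * ((real j - 1) / real j) + (1 - c) * 1"
    by (rule Youngs_inequality_0) (use c pos in auto)
  then have A: "((real j - 1) / real j) powr c \<le> 1 - c / real j"
    using j2 by (simp add: field_simps)
  have "real (j - 1) powr c = real j powr c * ((real j - 1) / real j) powr c"
    using j2 by (simp add: powr_divide of_nat_diff)
  also have "\<dots> \<le> real j powr c * (1 - c / real j)"
    using A by (intro mult_left_mono) auto
  also have "\<dots> = real j powr c - c * real j powr (c - 1)"
    using j2 by (simp add: powr_diff field_simps)
  finally show ?thesis by simp
qed

lemma sum_powr_bound:
  fixes c :: real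
  assumes c: "0 < c" "c \<le> 1"
  shows "(\<Sum>j=1..N. real j powr (c - 1)) \<le> real N powr c / c"
proof (induction N)
  case 0 then show ?case by simp
next
  case (Suc N)
  have "(\<Sum>j=1..Suc N. real j powr (c - 1)) = (\<Sum>j=1..N. real j powr (c - 1)) + real (Suc N) powr (c - 1)"
    by simp
  also have "\<dots> \<le> real N powr c / c + real (Suc N) powr (c - 1)" using Suc by simp
  also have "\<dots> \<le> real (Suc N) powr c / c"
  proof -
    have "real (Suc N) powr (c-1) \<le> (real (Suc N) powr c - real N powr c)/c"
      using key_ineq[OF c, of "Suc N"] c by (simp add: pos_le_divide_eq mult.commute)
    then show ?thesis by (simp add: diff_divide_distrib)
  qed
  finally show ?case .
qed

lemma sum_ratio_bound:
  fixes b :: real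
  assumes b: "0 < b" "b < 1" and N: "N \<ge> 1"
  shows "(\<Sum>j=1..N. (real N / real j) powr b) \<le> real N / (1 - b)"
proof -
  have "(\<Sum>j=1..N. (real N / real j) powr b) = real N powr b * (\<Sum>j=1..N. real j powr ((1 - b) - 1))"
    by (simp add: sum_distrib_left powr_divide powr_minus_divide)
  also have "\<dots> \<le> real N powr b * (real N powr (1 - b) / (1 - b))"
    using sum_powr_bound[of "1 - b" N] b by (intro mult_left_mono) auto
  also have "\<dots> = real N / (1 - b)"
    using N by (simp add: powr_add[symmetric])
  finally show ?thesis .
qed
theorem mainTheorem8:
  fixes l :: real and p p' :: "real \<Rightarrow> real"
  assumes l: "0 < l" "l < 1"
    and deriv: "\<And>t. t \<ge> 1 \<Longrightarrow> (p has_real_derivative p' t) (at t within {1..})"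
    and cont_deriv: "continuous_on {1..} p'"
    and pos: "\<And>t. t \<ge> 1 \<Longrightarrow> p t > 0"
    and noninc: "\<And>s t. 1 \<le> s \<Longrightarrow> s \<le> t \<Longrightarrow> p t \<le> p s"
    and lim0: "(p \<longlongrightarrow> 0) at_top"
    and nondec: "\<And>s t. 1 \<le> s \<Longrightarrow> s \<le> t \<Longrightarrow> p s * ln s \<le> p t * ln t"
    and liminf: "filterlim (\<lambda>t. p t * ln t) at_top at_top"
  shows "(\<lambda>N::nat. (\<Sum>j=1..N. l powr (p (real j) * ln (real j)))
                    / (real N powr (1 + p (real N) * ln l))) \<longlonglongrightarrow> 1"
proof -
  define a where "a = - ln l"
  have a: "a > 0" using l by (simp add: a_def)
  define f where "f t = l powr (p t * ln t)" for t
  define D where "D N = real N powr (1 + p (real N) * ln l)" for N :: nat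
  define S where "S N = (\<Sum>j=1..N. f (real j))" for N :: nat
  have fexp: "f t = exp (- a * (p t * ln t))" for t
    using l by (simp add: f_def powr_def a_def mult.commute)
  have fpos: "f t > 0" for t by (simp add: fexp)
  have fmono: "f t \<le> f s" if "1 \<le> s" "s \<le> t" for s t
    using nondec[OF that] a by (simp add: fexp)
  have fle1: "f t \<le> 1" if "1 \<le> t" for t
  proof -
    have "p t * ln t \<ge> 0" using pos[OF that] that by simp
    then show ?thesis using a by (simp add: fexp mult_nonneg_nonneg)
  qed
  have Deq: "D N = real N * f (real N)" if "N \<ge> 1" for N
  proof -
    have "D N = real N * real N powr (p (real N) * ln l)"
      using that by (simp add: D_def powr_add)
    also have "real N powr (p (real N) * ln l) = f (real N)"
      using that by (simp add: powr_def fexp a_def)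
    finally show ?thesis .
  qed
  have Dpos: "D N > 0" if "N \<ge> 1" for N using that by (simp add: Deq fpos)
  have lower: "D N \<le> S N" if "N \<ge> 1" for N
  proof -
    have "D N = (\<Sum>j=1..N. f (real N))" using that by (simp add: Deq)
    also have "\<dots> \<le> S N" unfolding S_def by (intro sum_mono fmono) auto
    finally show ?thesis .
  qed
  have upper: "S N \<le> real J0 + f (real N) * (real N / (1 - b))"
    if b: "0 < b" "b < 1" and J0: "J0 \<ge> 1" "\<And>t. t \<ge> real J0 \<Longrightarrow> p t \<le> b / a"
      and N: "N \<ge> 1" for b J0 N
  proof -
    define h where "h j = (if j < J0 then 1 else 0::real)" for j :: nat
    have F4: "f (real j) \<le> h j + f (real N) * (real N / real j) powr b" if j: "j \<in> {1..N}" for j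
    proof (cases "j < J0")
      case True
      have "0 \<le> f (real N) * (real N / real j) powr b" using fpos[of "real N"] by (simp add: less_imp_le)
      then show ?thesis using fle1[of "real j"] j True by (simp add: h_def)
    next
      case False
      have j1: "real j \<ge> 1" "real j \<le> real N" using j by auto
      have pj: "p (real j) \<le> b / a" using J0(2)[of "real j"] False by simp
      have lnjN: "ln (real j) \<le> ln (real N)" using j1 by simp
      have "p (real N) * ln (real N) \<le> p (real j) * ln (real N)"
        using noninc[OF j1] N by (intro mult_right_mono) auto
      then have "p (real N) * ln (real N) - p (real j) * ln (real j) \<le> p (real j) * (ln (real N) - ln (real j))"
        by (simp add: algebra_simps)
      also have "\<dots> \<le> b / a * (ln (real N) - ln (real j))"
        using pj lnjN by (intro mult_right_mono) auto
      finally have "a * (p (real N) * ln (real N) - p (real j) * ln (real j)) \<le> b * (ln (real N) - ln (real j))"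
        using a by (simp add: field_simps)
      then have "- a * (p (real j) * ln (real j)) \<le> - a * (p (real N) * ln (real N)) + b * ln (real N / real j)"
        using j1 by (simp add: ln_div algebra_simps)
      then have "f (real j) \<le> f (real N) * (real N / real j) powr b"
        using j1 by (simp add: fexp powr_def exp_add[symmetric] mult.commute)
      then show ?thesis by (simp add: h_def False)
    qed
    have hsum: "(\<Sum>j=1..M. h j) \<le> real (min M J0)" for M
      by (induction M) (auto simp: h_def)
    have "S N \<le> (\<Sum>j=1..N. h j + f (real N) * (real N / real j) powr b)"
      unfolding S_def by (intro sum_mono F4)
    also have "\<dots> = (\<Sum>j=1..N. h j) + f (real N) * (\<Sum>j=1..N. (real N / real j) powr b)"
      by (simp add: sum.distrib sum_distrib_left)
    also have "\<dots> \<le> real J0 + f (real N) * (real N / (1 - b))"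
      using hsum[of N] sum_ratio_bound[OF b N] fpos[of "real N"]
      by (intro add_mono mult_left_mono) auto
    finally show ?thesis .
  qed
  have Dlim: "filterlim D at_top sequentially"
  proof -
    have ev: "eventually (\<lambda>N. p (real N) < 1 / (2 * a)) sequentially"
      using order_tendstoD(2)[OF filterlim_compose[OF lim0 filterlim_real_sequentially], of "1/(2*a)"] a
      by (simp add: o_def)
    have "eventually (\<lambda>N. real N powr (1/2) \<le> D N) sequentially"
      using ev eventually_ge_at_top[of "1::nat"]
    proof eventually_elim
      case (elim N)
      have "1/2 \<le> 1 + p (real N) * ln l"
      proof -
        have "p (real N) * a \<le> 1/2" using elim a by (simp add: field_simps)
        then show ?thesis by (simp add: a_def)
      qed
      then show ?case using elim by (simp add: D_def powr_mono)
    qed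
    moreover have "filterlim (\<lambda>N::nat. real N powr (1/2)) at_top sequentially"
      by real_asymp
    ultimately show ?thesis using filterlim_at_top_mono by blast
  qed
  show ?thesis
  unfolding S_def[symmetric] D_def[symmetric] f_def[symmetric]
  proof (rule LIMSEQ_I)
    fix r :: real assume r: "r > 0"
    define b where "b = min (1/2) (r/4)"
    have b: "0 < b" "b \<le> 1/2" "b \<le> r/4" using r by (auto simp: b_def)
    have "eventually (\<lambda>t. p t < b / a) at_top"
      using order_tendstoD(2)[OF lim0, of "b/a"] a b by simp
    then obtain T where T: "\<And>t. t \<ge> T \<Longrightarrow> p t < b / a" by (auto simp: eventually_at_top_linorder)
    define J0 where "J0 = nat \<lceil>max T 1\<rceil>"
    have J0: "J0 \<ge> 1" "\<And>t. t \<ge> real J0 \<Longrightarrow> p t \<le> b / a"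
    proof -
      have c1: "real_of_int \<lceil>max T 1\<rceil> \<ge> max T 1" by (rule le_of_int_ceiling)
      have c2: "real J0 = real_of_int \<lceil>max T 1\<rceil>" unfolding J0_def using c1 by simp
      show "J0 \<ge> 1" using c1 c2 by linarith
      show "p t \<le> b / a" if "t \<ge> real J0" for t
      proof -
        have "T \<le> t" using c1 that c2 by linarith
        then show ?thesis using T[of t] by simp
      qed
    qed
    have "((\<lambda>N. real J0 / D N) \<longlongrightarrow> 0) sequentially"
      by (intro tendsto_divide_0[OF tendsto_const] filterlim_at_top_imp_at_infinity Dlim)
    from LIMSEQ_D[OF this, of "r/2"] r obtain M where M: "\<And>N. N \<ge> M \<Longrightarrow> \<bar>real J0 / D N\<bar> < r/2"
      by auto
    have inv: "1 / (1 - b) \<le> 1 + r/2"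
    proof -
      have "1 \<le> (1 + 2*b) * (1 - b)" using b by (simp add: algebra_simps mult_nonneg_nonneg) 
      then have "1 / (1 - b) \<le> 1 + 2 * b" using b by (simp add: divide_le_eq)
      then show ?thesis using b by simp
    qed
    show "\<exists>no. \<forall>n\<ge>no. norm (S n / D n - 1) < r"
    proof (intro exI allI impI)
      fix N assume N: "N \<ge> max M 1"
      have N1: "N \<ge> 1" using N by simp
      have Dp: "D N > 0" using Dpos[OF N1] .
      have lo: "1 \<le> S N / D N" using lower[OF N1] Dp by simp
      have "S N / D N \<le> (real J0 + f (real N) * (real N / (1 - b))) / D N"
        using upper[of b J0 N] b J0 N1 Dp by (intro divide_right_mono) auto
      also have "\<dots> = real J0 / D N + 1 / (1 - b)"
      proof -
        have "f (real N) * (real N / (1 - b)) / D N = 1 / (1 - b)"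
          using Dp b N1 fpos[of "real N"] unfolding Deq[OF N1] by simp
        then show ?thesis by (simp add: add_divide_distrib)
      qed
      also have "\<dots> < r/2 + (1 + r/2)"
      proof -
        have "real J0 / D N < r/2" using M[of N] N Dp by simp
        then show ?thesis using inv by linarith
      qed
      finally show "norm (S N / D N - 1) < r" using lo by simp
    qed
  qed
qed

end
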